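(* Let $(X,D)$ be a nef toric pair and $\mathsf d$ an effective curve class with $\mathsf d\cdot D_j>0$ for all $j$. Then the set $\mathrm T(\mathfrak p)^X_{\mathsf d}$ consists of exactly one tropical curve $\Gamma$, namely the translate of the union of the rays of the fan of $X$ to the fixed point, and $\mathrm{Mult}(\Gamma)=1$.
   Context: $X=\prod_{i=1}^{r_X}\mathbb{P}^{G_i}(\mathsf w^{(i)})$ is a product of fake weighted projective spaces with fan $\Sigma\subset N_{\mathbb R}$, $N\cong\mathbb Z^{n_X}$, $M=\mathrm{Hom}(N,\mathbb Z)$; its rays $[D_1],\dots,[D_{l_D}]$, $l_D=n_X+r_X$, correspond to the toric divisors and have primitive generators $\Delta(j)$. (A fake weighted projective space $\mathbb P^G(\mathsf w)$, $\mathsf w=(w_1,\dots,w_{n+1})$ coprime positive integers, is the toric variety of the complete simplicial fan with rays spanned by primitive $\Delta(1),\dots,\Delta(n+1)\in N\cong\mathbb Z^n$ with $\sum w_k\Delta(k)=0$, and $G=N/\langle\Delta(k)\rangle$; $\Sigma$ is the product fan.) A genus $0$ degree $\mathsf d$ maximally tangent marked tropical curve in $X$ is (an isomorphism class of) a pair $(\Gamma,h)$: $\Gamma$ is a finite tree with some univalent vertices removed (giving non-compact edges), with no univalent or bivalent vertices, a weight $w:\Gamma^{[1]}\to\mathbb Z_{\ge0}$ on edges, non-compact edges being markings: weight-$0$ ones are interior markings $P_1$ (and $P_2$), and there is exactly one positive-weight non-compact edge (exterior marking) for each $j=1,\dots,l_D$; $h:\Gamma\to N_{\mathbb R}$ is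 proper continuous, constant on an edge iff its weight is $0$, otherwise an embedding onto a segment of a rational-slope line; at each vertex $V$ the balancing condition $\sum_{E\ni V}w(E)u_{(V,E)}=0$ holds ($u_{(V,E)}$ the primitive integral vector pointing from $h(V)$ along $h(E)$); the exterior marking for $D_j$ is parallel to $[D_j]$ (pointing in direction $\Delta(j)$) with weight $\mathsf d\cdot D_j$. An interior marking satisfies a $\psi^k$-condition if the vertex it is attached to is incident to exactly $k+2$ edges of positive weight. $\mathrm T(\mathfrak p)^X_{\mathsf d}$ is the set of such curves with one interior marking, mapped to a fixed general point of $N_{\mathbb R}$ and satisfying a $\psi^{n_X+r_X-2}$-condition. Multiplicity: let $A=\mathbb Z[N]\otimes\Lambda^\bullet M$ (elements $z^n\alpha$, product $z^{n}\alpha\cdot z^{n'}\beta=z^{n+n'}\alpha\wedge\beta$), and $\ell_k(z^{n_1}\alpha_1\otimes\cdots\otimes z^{n_k}\alpha_k)=z^{n_1+\cdots+n_k}\iota_{n_1+\cdots+n_k}(\alpha_1\wedge\cdots\wedge\alpha_k)$, $\iota$ contraction. Choose a sink vertex $V_\infty$ and orient edges toward it. Set $\zeta_E=z^{w(E)\Delta(j)}$ for the exterior marking of $D_j$, $\zeta_P$ a generator of $\Lambda^{n_X}M$ for an interior marking, and for a vertex $V\ne V_\infty$ with incoming edges $E_1,\dots,E_k$ and outgoing $E_{out}$, $\zeta_{E_{out}}=\ell_k(\zeta_{E_1}\otimes\cdots\otimes\zeta_{E_k})$ (all up to sign). Then $\zeta_\Gamma=\prod_{E\ni V_\infty}\zeta_E\in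 z^0\otimes\Lambda^{n_X}M$ and $\mathrm{Mult}(\Gamma)$ is its index in $\Lambda^{n_X}M$. *)

theory Defs
  imports "HOL-Analysis.Analysis"
begin

definition of_intv :: "int^'n::finite \<Rightarrow> real^'n" where
  "of_intv u = (\<chi> i. real_of_int (u $ i))"

definition primitive_vec :: "int^'n::finite \<Rightarrow> bool" where
  "primitive_vec u \<longleftrightarrow> Gcd (range (\<lambda>i. u $ i)) = 1"

text \<open>Data: r blocks (factors), l rays; ray j lies in block blk j, coordinate i of N
  belongs to block cblk i; w j is the weight of ray j in its factor.\<close>

definition fwps_product ::
  "nat \<Rightarrow> nat \<Rightarrow> (nat \<Rightarrow> int^'n::finite) \<Rightarrow> (nat \<Rightarrow> nat) \<Rightarrow> ('n \<Rightarrow> nat) \<Rightarrow> (nat \<Rightarrow> nat) \<Rightarrow> bool" where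
  "fwps_product r l \<Delta> blk cblk w \<longleftrightarrow>
     (\<forall>j<l. blk j < r) \<and> (\<forall>i. cblk i < r) \<and>
     (\<forall>j<l. \<forall>i. cblk i \<noteq> blk j \<longrightarrow> \<Delta> j $ i = 0) \<and>
     (\<forall>b<r. card {i. cblk i = b} \<ge> 1 \<and>
            card {j. j < l \<and> blk j = b} = card {i. cblk i = b} + 1) \<and>
     (\<forall>j<l. w j > 0 \<and> primitive_vec (\<Delta> j)) \<and>
     (\<forall>b<r. Gcd (w ` {j. j < l \<and> blk j = b}) = 1) \<and>
     (\<forall>b<r. (\<Sum>j\<in>{j. j < l \<and> blk j = b}. of_nat (w j) *s \<Delta> j) = 0) \<and>
     (\<forall>b<r. span (of_intv ` \<Delta> ` {j. j < l \<and> blk j = b}) = {x. \<forall>i. cblk i \<noteq> b \<longrightarrow> x $ i = 0})"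

text \<open>Vertices are natural numbers; compact edges are 2-element sets of vertices;
  tleg j is the vertex carrying the exterior marking for D_j; tmark the vertex carrying
  the interior marking P; tpos is h on vertices.\<close>

record ('n::finite) tcurve =
  tverts :: "nat set"
  tedges :: "nat set set"
  twt :: "nat set \<Rightarrow> nat"
  tleg :: "nat \<Rightarrow> nat"
  tmark :: nat
  tpos :: "nat \<Rightarrow> real^'n"

definition adj :: "nat set set \<Rightarrow> (nat \<times> nat) set" where
  "adj E = {(u, v). {u, v} \<in> E}"

definition prim_dir :: "real^'n::finite \<Rightarrow> int^'n" where
  "prim_dir x = (SOME u. primitive_vec u \<and> (\<exists>t>0. x = t *\<^sub>R of_intv u))"

definition tcurve_ok ::
  "nat \<Rightarrow> nat \<Rightarrow> (nat \<Rightarrow> int^'n::finite) \<Rightarrow> (nat \<Rightarrow> int) \<Rightarrow> real^'n \<Rightarrow> 'n tcurve \<Rightarrow> bool" where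
  "tcurve_ok r l \<Delta> c p \<Gamma> \<longleftrightarrow>
    (let V = tverts \<Gamma>; E = tedges \<Gamma> in
     finite V \<and> V \<noteq> {} \<and>
     (\<forall>e\<in>E. \<exists>u v. e = {u, v} \<and> u \<in> V \<and> v \<in> V \<and> u \<noteq> v) \<and>
     card E + 1 = card V \<and>
     (\<forall>u\<in>V. \<forall>v\<in>V. (u, v) \<in> (adj E)\<^sup>*) \<and>
     (\<forall>j<l. tleg \<Gamma> j \<in> V) \<and> tmark \<Gamma> \<in> V \<and>
     (\<forall>e\<in>E. twt \<Gamma> e > 0) \<and>
     (\<forall>v\<in>V. card {e\<in>E. v \<in> e} + card {j. j < l \<and> tleg \<Gamma> j = v}
              + (if tmark \<Gamma> = v then 1 else 0) \<ge> 3) \<and>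
     (\<forall>u v. {u, v} \<in> E \<longrightarrow> tpos \<Gamma> u \<noteq> tpos \<Gamma> v \<and>
              (\<exists>a::int^'n. \<exists>t>0. tpos \<Gamma> v - tpos \<Gamma> u = t *\<^sub>R of_intv a)) \<and>
     (\<forall>v\<in>V. (\<Sum>u\<in>{u. {u, v} \<in> E}. real (twt \<Gamma> {u, v}) *\<^sub>R of_intv (prim_dir (tpos \<Gamma> u - tpos \<Gamma> v)))
            + (\<Sum>j\<in>{j. j < l \<and> tleg \<Gamma> j = v}. real_of_int (c j) *\<^sub>R of_intv (\<Delta> j)) = 0) \<and>
     tpos \<Gamma> (tmark \<Gamma>) = p \<and>
     card {e\<in>E. tmark \<Gamma> \<in> e} + card {j. j < l \<and> tleg \<Gamma> j = tmark \<Gamma>} = CARD('n) + r)"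

definition tcurve_iso :: "nat \<Rightarrow> ('n::finite) tcurve \<Rightarrow> 'n tcurve \<Rightarrow> bool" where
  "tcurve_iso l \<Gamma> \<Gamma>' \<longleftrightarrow> (\<exists>f. bij_betw f (tverts \<Gamma>) (tverts \<Gamma>') \<and>
     (\<forall>u\<in>tverts \<Gamma>. \<forall>v\<in>tverts \<Gamma>. {u, v} \<in> tedges \<Gamma> \<longleftrightarrow> {f u, f v} \<in> tedges \<Gamma>') \<and>
     (\<forall>u\<in>tverts \<Gamma>. \<forall>v\<in>tverts \<Gamma>. {u, v} \<in> tedges \<Gamma> \<longrightarrow> twt \<Gamma>' {f u, f v} = twt \<Gamma> {u, v}) \<and>
     (\<forall>j<l. tleg \<Gamma>' j = f (tleg \<Gamma> j)) \<and> tmark \<Gamma>' = f (tmark \<Gamma>) \<and>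
     (\<forall>v\<in>tverts \<Gamma>. tpos \<Gamma>' (f v) = tpos \<Gamma> v))"

text \<open>The translate to p of the union of the rays of the fan: one vertex at p carrying
  all markings.\<close>

definition star_curve :: "real^'n::finite \<Rightarrow> 'n tcurve" where
  "star_curve p = \<lparr>tverts = {0}, tedges = {}, twt = (\<lambda>_. 0), tleg = (\<lambda>_. 0),
                   tmark = 0, tpos = (\<lambda>_. p)\<rparr>"

text \<open>Lambda^k M is represented by integer-valued alternating k-linear forms on N
  (functions of lists of length k); a form is a pair (degree, function).\<close>

type_synonym 'n form = "nat \<times> ((int^'n) list \<Rightarrow> int)"
type_synonym 'n mono = "(int^'n) \<times> 'n form"

definition wedge :: "('n::finite) form \<Rightarrow> 'n form \<Rightarrow> 'n form" where
  "wedge a b = (case a of (k, f) \<Rightarrow> case b of (m, g) \<Rightarrow>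
     (k + m, \<lambda>vs. \<Sum>S\<in>{S. S \<subseteq> {0..<k+m} \<and> card S = k}.
        (-1) ^ (\<Sum>S - k * (k - 1) div 2) * f (nths vs S) * g (nths vs ({0..<k+m} - S))))"

definition contract :: "int^'n::finite \<Rightarrow> 'n form \<Rightarrow> 'n form" where
  "contract n a = (case a of (k, f) \<Rightarrow> (k - 1, \<lambda>vs. if k = 0 then 0 else f (n # vs)))"

definition mono_unit :: "('n::finite) mono" where
  "mono_unit = (0, (0, \<lambda>_. 1))"

definition mmul :: "('n::finite) mono \<Rightarrow> 'n mono \<Rightarrow> 'n mono" where
  "mmul x y = (fst x + fst y, wedge (snd x) (snd y))"

definition prodl :: "('n::finite) mono list \<Rightarrow> 'n mono" where
  "prodl zs = foldr mmul zs mono_unit"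

definition ell :: "('n::finite) mono list \<Rightarrow> 'n mono" where
  "ell zs = (case prodl zs of (n, a) \<Rightarrow> (n, contract n a))"

definition nord :: "('n::finite) list" where
  "nord = (SOME xs. distinct xs \<and> set xs = UNIV)"

definition detform :: "(int^'n::finite) list \<Rightarrow> int" where
  "detform vs = det (\<chi> i j. (vs ! (THE k. k < length (nord::'n list) \<and> nord ! k = i)) $ j)"

definition zetaP :: "('n::finite) mono" where
  "zetaP = (0, (CARD('n), detform))"

definition incoming :: "nat \<Rightarrow> (nat \<Rightarrow> int^'n::finite) \<Rightarrow> (nat \<Rightarrow> int) \<Rightarrow> 'n tcurve \<Rightarrow> nat \<Rightarrow> 'n mono list" where
  "incoming l \<Delta> c \<Gamma> v =
     map (\<lambda>j. (c j *s \<Delta> j, (0, \<lambda>_. 1))) (filter (\<lambda>j. tleg \<Gamma> j = v) [0..<l])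
     @ (if tmark \<Gamma> = v then [zetaP] else [])"

text \<open>u is a child of v w.r.t. the sink s: edge {u,v}, and v lies on the side of s.\<close>
definition child :: "nat set set \<Rightarrow> nat \<Rightarrow> nat \<Rightarrow> nat \<Rightarrow> bool" where
  "child E s v u \<longleftrightarrow> {u, v} \<in> E \<and> (v, s) \<in> (adj (E - {{u, v}}))\<^sup>*"

fun zeta :: "nat \<Rightarrow> (nat \<Rightarrow> int^'n::finite) \<Rightarrow> (nat \<Rightarrow> int) \<Rightarrow> 'n tcurve \<Rightarrow> nat \<Rightarrow> nat \<Rightarrow> nat \<Rightarrow> 'n mono" where
  "zeta l \<Delta> c \<Gamma> s 0 v = mono_unit"
| "zeta l \<Delta> c \<Gamma> s (Suc k) v =
     ell (incoming l \<Delta> c \<Gamma> v @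
          map (zeta l \<Delta> c \<Gamma> s k) (sorted_list_of_set {u. child (tedges \<Gamma>) s v u}))"

text \<open>Mult: sink = least vertex; zeta_Gamma = product over edges at the sink; its index in
  Lambda^n M = |coefficient w.r.t. the generator|, read off by evaluating on a basis.\<close>
definition tmult :: "nat \<Rightarrow> (nat \<Rightarrow> int^'n::finite) \<Rightarrow> (nat \<Rightarrow> int) \<Rightarrow> 'n tcurve \<Rightarrow> nat" where
  "tmult l \<Delta> c \<Gamma> =
    (let s = Min (tverts \<Gamma>);
         zs = incoming l \<Delta> c \<Gamma> s @
              map (zeta l \<Delta> c \<Gamma> s (card (tverts \<Gamma>))) (sorted_list_of_set {u. child (tedges \<Gamma>) s s u})
     in nat \<bar>snd (snd (prodl zs)) (map (\<lambda>i. axis i 1) (nord::'n list))\<bar>)"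

end

theory Submission
  imports Defs
begin

lemma card_fibers:
  assumes "finite A" "finite B" "f ` A \<subseteq> B"
  shows "card A = (\<Sum>b\<in>B. card {a\<in>A. f a = b})"
proof -
  have "(\<Sum>b\<in>B. card {a\<in>A. f a = b}) = (\<Sum>b\<in>B. \<Sum>a\<in>A. if f a = b then 1 else 0)"
    using assms(1) by (simp add: sum.inter_filter[symmetric])
  also have "\<dots> = (\<Sum>a\<in>A. \<Sum>b\<in>B. if f a = b then 1 else 0)" by (rule sum.swap)
  also have "\<dots> = (\<Sum>a\<in>A. 1)"
    using assms by (intro sum.cong) (auto simp: sum.delta)
  finally show ?thesis by simp
qed

lemma l_eq:
  fixes cblk :: "'n::finite \<Rightarrow> nat"
  assumes "fwps_product r l \<Delta> blk cblk (w::nat\<Rightarrow>nat)"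
  shows "l = CARD('n) + r" and "r \<ge> 1"
proof -
  have bl: "\<forall>j<l. blk j < r" using assms unfolding fwps_product_def by (rule conjunct1)
  have cb: "\<forall>i::'n. cblk i < r" using assms unfolding fwps_product_def by (rule conjunct1[OF conjunct2])
  have cd0: "\<forall>b<r. card {i. cblk i = b} \<ge> 1 \<and> card {j. j < l \<and> blk j = b} = card {i. cblk i = b} + 1"
    using assms unfolding fwps_product_def by (rule conjunct1[OF conjunct2[OF conjunct2[OF conjunct2]]])
  have cd: "\<forall>b<r. card {j. j < l \<and> blk j = b} = card {i. cblk i = b} + 1"
    using cd0 by blast
  have "l = card {j. j < l}" by simp
  also have "\<dots> = (\<Sum>b<r. card {j\<in>{j. j < l}. blk j = b})"
    using card_fibers[of "{j. j<l}" "{..<r}" blk] bl by auto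
  also have "\<dots> = (\<Sum>b<r. card {i\<in>(UNIV::'n set). cblk i = b} + 1)"
    using cd by (intro sum.cong) auto
  also have "\<dots> = CARD('n) + r"
  proof -
    have "CARD('n) = (\<Sum>b<r. card {i\<in>(UNIV::'n set). cblk i = b})"
      using card_fibers[of "UNIV::'n set" "{..<r}" cblk] cb by auto
    then show ?thesis by (subst sum.distrib) simp
  qed
  finally show "l = CARD('n) + r" .
  show "r \<ge> 1" using cb[rule_format, of undefined] by simp
qed

lemma of_intv_sum: "of_intv (\<Sum>j\<in>A. c j *s \<Delta> j) = (\<Sum>j\<in>A. real_of_int (c j) *\<^sub>R of_intv (\<Delta> j))"
  unfolding of_intv_def
  unfolding of_intv_def
  by (induction A rule: infinite_finite_induct) (auto simp: vec_eq_iff algebra_simps)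

lemma star_ok:
  assumes "fwps_product r l \<Delta> blk cblk (w::nat\<Rightarrow>nat)"
    and "(\<Sum>j<l. c j *s \<Delta> j) = 0"
  shows "tcurve_ok r l \<Delta> c p (star_curve p)"
proof -
  have le: "l = CARD('a) + r" "r \<ge> 1" using l_eq[OF assms(1)] by auto
  have "(\<Sum>j<l. real_of_int (c j) *\<^sub>R of_intv (\<Delta> j)) = 0"
    using of_intv_sum[of c \<Delta> "{..<l}"] assms(2) by (simp add: of_intv_def vec_eq_iff)
  moreover have "{j. j < l} = {..<l}" by auto
  moreover have "2 \<le> CARD('a) + r"
  proof -
    have "0 < CARD('a)" by simp
    then show ?thesis using le by linarith
  qed
  ultimately show ?thesis using le
    unfolding tcurve_ok_def star_curve_def by (simp add: adj_def Let_def)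
qed

lemma unique:
  assumes fw: "fwps_product r l \<Delta> blk cblk (w::nat\<Rightarrow>nat)"
    and ok: "tcurve_ok r l \<Delta> c p \<Gamma>"
  shows "tcurve_iso l \<Gamma> (star_curve p)"
proof -
  define V where "V = tverts \<Gamma>"
  define E where "E = tedges \<Gamma>"
  define m where "m = tmark \<Gamma>"
  have le: "l = CARD('a) + r" using l_eq[OF fw] by auto
  note okk = ok[unfolded tcurve_ok_def Let_def, folded V_def E_def m_def]
  have finV: "finite V" using okk by blast
  have edg: "\<forall>e\<in>E. \<exists>u v. e = {u, v} \<and> u \<in> V \<and> v \<in> V \<and> u \<noteq> v" using okk by blast
  have cardE: "card E + 1 = card V" using okk by blast
  have legs: "\<forall>j<l. tleg \<Gamma> j \<in> V" using okk by blast
  have mV: "m \<in> V" using okk by blast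
  have val: "\<forall>v\<in>V. card {e\<in>E. v \<in> e} + card {j. j < l \<and> tleg \<Gamma> j = v}
              + (if m = v then 1 else 0) \<ge> 3" using okk by blast
  have pos: "tpos \<Gamma> m = p" using okk by blast
  have mdeg: "card {e\<in>E. m \<in> e} + card {j. j < l \<and> tleg \<Gamma> j = m} = CARD('a) + r"
    using okk by blast
  have EV: "E \<subseteq> Pow V"
  proof
    fix e assume "e \<in> E"
    then obtain u v where "e = {u, v}" "u \<in> V" "v \<in> V" using edg by blast
    then show "e \<in> Pow V" by simp
  qed
  have finE: "finite E" by (rule finite_subset[OF EV]) (simp add: finV)
  have S1: "(\<Sum>v\<in>V. card {e\<in>E. v \<in> e}) = 2 * card E"
  proof -
    have "(\<Sum>v\<in>V. card {e\<in>E. v \<in> e}) = (\<Sum>v\<in>V. \<Sum>e\<in>E. if v \<in> e then 1 else 0)"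
      using finE by (simp add: sum.inter_filter[symmetric])
    also have "\<dots> = (\<Sum>e\<in>E. \<Sum>v\<in>V. if v \<in> e then 1 else 0)" by (rule sum.swap)
    also have "\<dots> = (\<Sum>e\<in>E. 2)"
    proof (intro sum.cong refl)
      fix e assume "e \<in> E"
      then obtain u v where e: "e = {u, v}" "u \<in> V" "v \<in> V" "u \<noteq> v" using edg by blast
      have "(\<Sum>x\<in>V. if x \<in> e then 1 else 0) = card {x\<in>V. x \<in> e}"
        using finV by (simp add: sum.inter_filter[symmetric])
      also have "{x\<in>V. x \<in> e} = {u, v}" using e by auto
      finally show "(\<Sum>x\<in>V. if x \<in> e then 1 else 0) = (2::nat)" using e by simp
    qed
    finally show ?thesis by simp
  qed
  have S2: "(\<Sum>v\<in>V. card {j. j < l \<and> tleg \<Gamma> j = v}) = l"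
  proof -
    have "tleg \<Gamma> ` {j. j < l} \<subseteq> V" using legs by blast
    then show ?thesis using card_fibers[of "{j. j<l}" V "tleg \<Gamma>"] finV by simp
  qed
  have tot: "(\<Sum>v\<in>V. card {e\<in>E. v \<in> e} + card {j. j < l \<and> tleg \<Gamma> j = v}) = 2 * card E + l"
    using S1 S2 by (simp add: sum.distrib)
  have split: "(\<Sum>v\<in>V. card {e\<in>E. v \<in> e} + card {j. j < l \<and> tleg \<Gamma> j = v})
     = l + (\<Sum>v\<in>V-{m}. card {e\<in>E. v \<in> e} + card {j. j < l \<and> tleg \<Gamma> j = v})"
    unfolding sum.remove[OF finV mV] using mdeg le by simp
  have "(\<Sum>v\<in>V-{m}. (3::nat)) \<le> (\<Sum>v\<in>V-{m}. card {e\<in>E. v \<in> e} + card {j. j < l \<and> tleg \<Gamma> j = v})"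
  proof (rule sum_mono)
    fix v assume "v \<in> V - {m}"
    then have "v \<in> V" "m \<noteq> v" by auto
    then show "3 \<le> card {e\<in>E. v \<in> e} + card {j. j < l \<and> tleg \<Gamma> j = v}"
      using val[rule_format, of v] by simp
  qed
  moreover have "(\<Sum>v\<in>V-{m}. (3::nat)) = 3 * card E"
    using cardE mV finV by simp
  ultimately have "card E = 0" using tot split by linarith
  then have E0: "E = {}" using finE by simp
  then have "card V = 1" using cardE by simp
  then have V1: "V = {m}" using mV by (metis card_1_singletonE singletonD)
  have legm: "\<forall>j<l. tleg \<Gamma> j = m" using legs V1 by blast
  show ?thesis
    unfolding tcurve_iso_def star_curve_def
    apply (rule exI[of _ "\<lambda>_. 0"])
    using V1 E0 legm pos by (simp add: V_def E_def m_def bij_betw_def)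
qed

lemma sum_lt_gauss: "\<Sum>{..<n} = n * (n - 1) div (2::nat)"
proof (cases n)
  case 0 then show ?thesis by simp
next
  case (Suc k)
  have "{..<Suc k} = {0..k}" by auto
  then show ?thesis using Suc gauss_sum_nat[of k] by (simp add: mult.commute)
qed

lemma card0_sub: "{S. S \<subseteq> {..<k} \<and> card S = 0} = {{}::nat set}"
  by (auto dest: finite_subset)

lemma cardk_sub: "{S. S \<subseteq> {..<k} \<and> card S = k} = {{..<k::nat}}"
proof -
  have "S = {..<k}" if "S \<subseteq> {..<k}" "card S = k" for S
    using that card_subset_eq[of "{..<k}" S] by simp
  then show ?thesis by auto
qed

lemma wedge_unit_left: "wedge (0, \<lambda>_. 1) (k, f) = (k, \<lambda>vs. f (take k vs))"
  unfolding wedge_def by (simp add: card0_sub atLeast0LessThan)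

lemma wedge_unit_right: "wedge (k, f) (0, \<lambda>_. 1) = (k, \<lambda>vs. f (take k vs))"
  unfolding wedge_def by (simp add: cardk_sub sum_lt_gauss atLeast0LessThan)

lemma snd_mmul: "snd (mmul a b) = wedge (snd a) (snd b)" by (simp add: mmul_def)

lemma foldr_triv:
  assumes "\<forall>x\<in>set ts. snd x = (0, \<lambda>_. 1)" "snd y = (k, g)" "\<forall>vs. g (take k vs) = g vs"
  shows "snd (foldr mmul ts y) = (k, g)"
  using assms(1)
proof (induction ts)
  case Nil then show ?case using assms(2) by simp
next
  case (Cons a ts)
  then have "snd (foldr mmul ts y) = (k, g)" "snd a = (0, \<lambda>_. 1)" by auto
  then show ?case using assms(3) by (simp add: snd_mmul wedge_unit_left)
qed

lemma nord_prop: "distinct (nord::'n::finite list) \<and> set (nord::'n list) = UNIV"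
  unfolding nord_def by (rule someI_ex) (use finite_distinct_list[of "UNIV::'n set"] in auto)

lemma detform_basis: "detform (map (\<lambda>i. axis i 1) (nord::'n::finite list)) = 1"
proof -
  have d: "distinct (nord::'n list)" and s: "set (nord::'n list) = UNIV" using nord_prop by auto
  have key: "(map (\<lambda>i. axis i (1::int)) (nord::'n list) ! (THE k. k < length (nord::'n list) \<and> nord ! k = i)) = axis i 1" for i
  proof -
    obtain k where k: "k < length (nord::'n list)" "nord ! k = i"
      using s by (metis UNIV_I in_set_conv_nth)
    have "(THE k. k < length (nord::'n list) \<and> nord ! k = i) = k"
      using k d by (auto intro!: the_equality simp: nth_eq_iff_index_eq)
    then show ?thesis using k by simp
  qed
  have "(\<chi> i j. (map (\<lambda>i. axis i (1::int)) (nord::'n list) ! (THE k. k < length (nord::'n list) \<and> nord ! k = i)) $ j) = mat 1"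
  proof -
    have "(\<chi> i j. (map (\<lambda>i. axis i (1::int)) (nord::'n list) ! (THE k. k < length (nord::'n list) \<and> nord ! k = i)) $ j) = (\<chi> i j. axis i (1::int) $ j)"
      by (simp only: key)
    also have "\<dots> = mat 1" by (simp add: vec_eq_iff mat_def axis_def)
    finally show ?thesis .
  qed
  then show ?thesis unfolding detform_def by simp
qed

lemma star_mult: "tmult l \<Delta> c (star_curve p :: 'n::finite tcurve) = 1"
proof -
  let ?ts = "map (\<lambda>j. (c j *s \<Delta> j, (0::nat, \<lambda>_::(int^'n) list. 1::int))) [0..<l]"
  have ch: "{u. child {} 0 0 u} = {}" by (simp add: child_def)
  have inc: "incoming l \<Delta> c (star_curve p) 0 = ?ts @ [zetaP]"
    unfolding incoming_def star_curve_def by simp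
  have y: "snd (mmul (zetaP::'n mono) mono_unit) = (CARD('n), \<lambda>vs. detform (take CARD('n) vs))"
    by (simp add: mmul_def zetaP_def mono_unit_def wedge_unit_right)
  have "snd (prodl (?ts @ [zetaP::'n mono])) = (CARD('n), \<lambda>vs. detform (take CARD('n) vs))"
    unfolding prodl_def using foldr_triv[OF _ y] by simp
  moreover have "length (nord::'n list) = CARD('n)"
    using nord_prop distinct_card by metis
  moreover have m: "Min (tverts (star_curve p :: 'n tcurve)) = 0" "tedges (star_curve p :: 'n tcurve) = {}"
    by (simp_all add: star_curve_def)
  ultimately show ?thesis
    unfolding tmult_def Let_def m
    by (simp add: inc ch detform_basis)
qed

theorem proposition5p1:
  fixes r l :: nat and \<Delta> :: "nat \<Rightarrow> int^'n::finite"
    and blk :: "nat \<Rightarrow> nat" and cblk :: "'n \<Rightarrow> nat" and w :: "nat \<Rightarrow> nat"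
    and c :: "nat \<Rightarrow> int"
  assumes "fwps_product r l \<Delta> blk cblk w"
    and "\<forall>j<l. c j > 0"
    and "(\<Sum>j<l. c j *s \<Delta> j) = 0"
  shows "\<exists>Z. Z \<in> null_sets lborel \<and>
           (\<forall>p. p \<notin> Z \<longrightarrow>
              tcurve_ok r l \<Delta> c p (star_curve p) \<and>
              (\<forall>\<Gamma>. tcurve_ok r l \<Delta> c p \<Gamma> \<longrightarrow> tcurve_iso l \<Gamma> (star_curve p)) \<and>
              tmult l \<Delta> c (star_curve p) = 1)"
  proof -
  have ok: "tcurve_ok r l \<Delta> c p (star_curve p)" for p using star_ok assms(1) assms(3) by blast
  show ?thesis
    apply (rule exI[of _ "{}"])
    using ok unique[OF assms(1)] star_mult[of l \<Delta> c] by blast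
qed

end
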